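(* Consider the model described in the context, in the variant where walk-in customers may only choose arrival times in $[0,T]$. Let $F_e$ be an equilibrium arrival distribution (supported in $[0,T]$). Then: (i) $F_e$ has no atom at any time $t\in(0,T]$, i.e. $F_e(t)=\lim_{s\uparrow t}F_e(s)$ for all $t\in(0,T]$; (ii) if $\tau_1>0$ (no scheduled customer at time $0$), then $F_e$ has an atom at $0$, i.e. $F_e(0)>0$. (When $\tau_1=0$, an atom at $0$ is possible but not necessary.)
   Context: Model: a single server operates from time $0$ and stops admitting walk-in customers after time $T>0$; all customers who arrived by time $T$ are served. Service times are i.i.d. exponential with rate $\mu>0$. There are $M\ge1$ scheduled customers with deterministic arrival times $0\le \tau_1<\tau_2<\dots<\tau_M\le T$; set $\tau_0=0$, $\tau_{M+1}=T$. The number of walk-in customers is Poisson distributed with mean $\lambda>0$. Service is first-come first-served, except that scheduled customers have non-preemptive priority over walk-in customers: a service in progress is never interrupted, and whenever the server becomes free, waiting scheduled customers are served (in order of their scheduled times) before any waiting walk-in customer. If several walk-in customers arrive at the same instant, their order in the queue is a uniformly random permutation. Walk-ins use a common (symmetric) mixed strategy: each independently draws its arrival time from a distribution with cdf $F$. The waiting time of a customer is the time from her arrival until her service starts. For a strategy $F$ used by all walk-ins, let $E_w(t)$ denote the expected waiting time of a tagged walk-in customer arriving at time $t$ (averaged over the numbers of other arrivals and, at atoms of $F$, over the random tie-breaking). Definition: $F_e$ is an equilibrium arrival distribution if there is a constant $E_w\ge0$ such that, under the dynamics induced when all walk-ins use $F_e$, $E_w(t)=E_w$ for every $t$ in the support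 of $F_e$ (every time chosen with positive density or positive probability) and $E_w(t)\ge E_w$ for every admissible $t$ outside the support. An atom of $F_e$ at $t$ is a point with $F_e(t)-\lim_{s\uparrow t}F_e(s)>0$. *)

theory Defs
  imports "HOL-Probability.Probability" "HOL-Combinatorics.Permutations"
begin

text \<open>Customers: Inl j = scheduled customer j (j < M, arrival tau ! j);
  Inr i = walk-in customer i (i \<le> n); walk-in n is the tagged customer,
  walk-ins 0..n-1 are the other walk-ins.\<close>

type_synonym cust = "nat + nat"

definition customers :: "nat \<Rightarrow> nat \<Rightarrow> cust set" where
  "customers M n = Inl ` {..<M} \<union> Inr ` {..n}"

definition arr :: "real list \<Rightarrow> (nat \<Rightarrow> real) \<Rightarrow> cust \<Rightarrow> real" where
  "arr tau w c = (case c of Inl j \<Rightarrow> tau ! j | Inr i \<Rightarrow> w i)"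

definition prec :: "real list \<Rightarrow> (nat \<Rightarrow> real) \<Rightarrow> (nat \<Rightarrow> nat) \<Rightarrow> cust \<Rightarrow> cust \<Rightarrow> bool" where
  "prec tau w rk c d = (case (c, d) of
      (Inl j, Inl k) \<Rightarrow> tau ! j < tau ! k
    | (Inl j, Inr i) \<Rightarrow> True
    | (Inr i, Inl j) \<Rightarrow> False
    | (Inr i, Inr k) \<Rightarrow> w i < w k \<or> (w i = w k \<and> rk i < rk k))"

definition next_service ::
  "(cust \<Rightarrow> real) \<Rightarrow> (cust \<Rightarrow> cust \<Rightarrow> bool) \<Rightarrow> cust set \<Rightarrow> real \<Rightarrow> real \<times> cust" where
  "next_service a pr U c =
     (let c' = max c (Min (a ` U))
      in (c', THE i. i \<in> U \<and> a i \<le> c' \<and> (\<forall>j\<in>U. a j \<le> c' \<longrightarrow> j \<noteq> i \<longrightarrow> pr i j)))"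

text \<open>State after k service starts: (time server next becomes free, unserved customers,
  recorded service start times).  Server starts free at time 0.\<close>
primrec run ::
  "(cust \<Rightarrow> real) \<Rightarrow> (cust \<Rightarrow> cust \<Rightarrow> bool) \<Rightarrow> (cust \<Rightarrow> real) \<Rightarrow> cust set \<Rightarrow> nat
     \<Rightarrow> real \<times> cust set \<times> (cust \<Rightarrow> real)" where
  "run a pr S U0 0 = (0, U0, \<lambda>_. 0)"
| "run a pr S U0 (Suc k) =
     (case run a pr S U0 k of (c, U, st) \<Rightarrow>
        if U = {} then (c, U, st)
        else (case next_service a pr U c of (c', i) \<Rightarrow> (c' + S i, U - {i}, st(i := c'))))"

text \<open>Waiting time of the tagged walk-in (arriving at t) given the other walk-ins'
  arrival times x 0..x (n-1), tie-breaking ranks rk on {..n} and service times S.\<close>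
definition tagged_wait ::
  "real list \<Rightarrow> real \<Rightarrow> nat \<Rightarrow> (nat \<Rightarrow> real) \<Rightarrow> (nat \<Rightarrow> nat) \<Rightarrow> (cust \<Rightarrow> real) \<Rightarrow> real" where
  "tagged_wait tau t n x rk S =
     (let w = (\<lambda>i. if i = n then t else x i);
          U0 = customers (length tau) n
      in snd (snd (run (arr tau w) (prec tau w rk) S U0 (card U0))) (Inr n) - t)"

definition exp_service :: "real \<Rightarrow> real measure" where
  "exp_service mu = density lborel (exponential_density mu)"

definition exp_wait :: "real list \<Rightarrow> real \<Rightarrow> real \<Rightarrow> real measure \<Rightarrow> real \<Rightarrow> ennreal" where
  "exp_wait tau mu lam P t =
     (\<Sum>n. ennreal (pmf (poisson_pmf lam) n) *
        (\<integral>\<^sup>+ x. (\<integral>\<^sup>+ rk. (\<integral>\<^sup>+ S. ennreal (tagged_wait tau t n x rk S)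
              \<partial>(PiM (customers (length tau) n) (\<lambda>_. exp_service mu)))
           \<partial>(measure_pmf (pmf_of_set {rk. rk permutes {..n}})))
         \<partial>(PiM {..<n} (\<lambda>_. P))))"

definition dist_support :: "real measure \<Rightarrow> real set" where
  "dist_support P = {t. \<forall>e>0. measure P {t - e<..<t + e} > 0}"

definition is_equilibrium :: "real list \<Rightarrow> real \<Rightarrow> real \<Rightarrow> real \<Rightarrow> real measure \<Rightarrow> bool" where
  "is_equilibrium tau mu lam T P \<longleftrightarrow>
     (\<exists>E::real. E \<ge> 0 \<and>
        (\<forall>t\<in>{0..T}. (t \<in> dist_support P \<longrightarrow> exp_wait tau mu lam P t = ennreal E) \<and>
                     (t \<notin> dist_support P \<longrightarrow> exp_wait tau mu lam P t \<ge> ennreal E)))"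

end

theory Submission
  imports Defs
begin


definition qwf :: "('c \<Rightarrow> real) \<Rightarrow> ('c \<Rightarrow> 'c \<Rightarrow> bool) \<Rightarrow> 'c set \<Rightarrow> bool" where
 "qwf a pr U0 \<longleftrightarrow> finite U0 \<and> (\<forall>i\<in>U0. \<forall>j\<in>U0. i \<noteq> j \<longrightarrow> pr i j \<or> pr j i)
   \<and> (\<forall>i\<in>U0. \<forall>j\<in>U0. pr i j \<longrightarrow> \<not> pr j i)
   \<and> (\<forall>i\<in>U0. \<forall>j\<in>U0. \<forall>k\<in>U0. pr i j \<longrightarrow> pr j k \<longrightarrow> pr i k)"

lemma qwf_fin: "qwf a pr U0 \<Longrightarrow> finite U0" unfolding qwf_def by blast
lemma qwf_total: "qwf a pr U0 \<Longrightarrow> i \<in> U0 \<Longrightarrow> j \<in> U0 \<Longrightarrow> i \<noteq> j \<Longrightarrow> pr i j \<or> pr j i"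
  unfolding qwf_def by blast
lemma qwf_asym: "qwf a pr U0 \<Longrightarrow> i \<in> U0 \<Longrightarrow> j \<in> U0 \<Longrightarrow> pr i j \<Longrightarrow> pr j i \<Longrightarrow> False"
  unfolding qwf_def by blast
lemma qwf_trans: "qwf a pr U0 \<Longrightarrow> i \<in> U0 \<Longrightarrow> j \<in> U0 \<Longrightarrow> k \<in> U0 \<Longrightarrow> pr i j \<Longrightarrow> pr j k \<Longrightarrow> pr i k"
  unfolding qwf_def by blast

lemma qwf_top:
  assumes "qwf a pr U0" "finite Q" "Q \<noteq> {}" "Q \<subseteq> U0"
  shows "\<exists>i\<in>Q. \<forall>j\<in>Q. j \<noteq> i \<longrightarrow> pr i j"
  using assms(2,3,4)
proof (induction Q rule: finite_ne_induct)
  case (singleton x) then show ?case by auto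
next
  case (insert x F)
  then obtain m where m: "m \<in> F" "\<forall>j\<in>F. j \<noteq> m \<longrightarrow> pr m j" by auto
  have xm: "x \<noteq> m" using m insert by auto
  show ?case
  proof (cases "pr x m")
    case True
    have "\<forall>j\<in>insert x F. j \<noteq> x \<longrightarrow> pr x j"
    proof (intro ballI impI)
      fix j assume "j \<in> insert x F" "j \<noteq> x"
      then have "j \<in> F" by auto
      show "pr x j"
      proof (cases "j = m")
        case True then show ?thesis using \<open>pr x m\<close> by simp
      next
        case False
        then have "pr m j" using m \<open>j \<in> F\<close> by auto
        moreover have "x \<in> U0" "m \<in> U0" "j \<in> U0" using insert.prems \<open>j \<in> F\<close> m(1) by auto
        ultimately show ?thesis using qwf_trans[OF assms(1)] True by blast
      qed
    qed
    then show ?thesis by blast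
  next
    case False
    moreover have "x \<in> U0" "m \<in> U0" using insert.prems m(1) by auto
    ultimately have "pr m x" using qwf_total[OF assms(1)] xm by blast
    then show ?thesis using m by auto
  qed
qed

lemma ns_fst: "fst (next_service a pr U c) = max c (Min (a ` U))"
  by (simp add: next_service_def Let_def)

lemma ns_snd:
  fixes c :: real
  assumes "qwf a pr U0" "U \<subseteq> U0" "U \<noteq> {}"
  defines "c' \<equiv> max c (Min (a ` U))"
  shows "snd (next_service a pr U c) \<in> U \<and> a (snd (next_service a pr U c)) \<le> c'
     \<and> (\<forall>j\<in>U. a j \<le> c' \<longrightarrow> j \<noteq> snd (next_service a pr U c) \<longrightarrow> pr (snd (next_service a pr U c)) j)"
proof -
  have fin: "finite U" using qwf_fin[OF assms(1)] assms(2) finite_subset by blast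
  have "Min (a ` U) \<in> a ` U" using fin assms(3) by simp
  then obtain i0 where i0: "i0 \<in> U" "a i0 = Min (a ` U)" by auto
  let ?Q = "{j\<in>U. a j \<le> c'}"
  have "i0 \<in> ?Q" using i0 by (auto simp: c'_def)
  then have "\<exists>i\<in>?Q. \<forall>j\<in>?Q. j \<noteq> i \<longrightarrow> pr i j"
    by (intro qwf_top[OF assms(1)]) (use fin assms(2) in auto)
  then obtain i where i: "i \<in> ?Q" "\<forall>j\<in>?Q. j \<noteq> i \<longrightarrow> pr i j" by blast
  have P: "i \<in> U \<and> a i \<le> c' \<and> (\<forall>j\<in>U. a j \<le> c' \<longrightarrow> j \<noteq> i \<longrightarrow> pr i j)" using i by auto
  have "(THE i. i \<in> U \<and> a i \<le> c' \<and> (\<forall>j\<in>U. a j \<le> c' \<longrightarrow> j \<noteq> i \<longrightarrow> pr i j)) = i"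
  proof (rule the_equality)
    fix i' assume "i' \<in> U \<and> a i' \<le> c' \<and> (\<forall>j\<in>U. a j \<le> c' \<longrightarrow> j \<noteq> i' \<longrightarrow> pr i' j)"
    then have A: "i' \<in> U" "a i' \<le> c'" "\<forall>j\<in>U. a j \<le> c' \<longrightarrow> j \<noteq> i' \<longrightarrow> pr i' j" by auto
    show "i' = i"
    proof (rule ccontr)
      assume ne: "i' \<noteq> i"
      have "pr i i'" using P A ne by auto
      moreover have "pr i' i" using P A ne by auto
      moreover have "i \<in> U0" "i' \<in> U0" using P A assms(2) by auto
      ultimately show False using qwf_asym[OF assms(1)] by blast
    qed
  qed (rule P)
  moreover have "snd (next_service a pr U c) = (THE i. i \<in> U \<and> a i \<le> c' \<and> (\<forall>j\<in>U. a j \<le> c' \<longrightarrow> j \<noteq> i \<longrightarrow> pr i j))"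
    by (simp add: next_service_def Let_def c'_def)
  ultimately show ?thesis using P by simp
qed

lemma ns_snd_unique:
  assumes "qwf a pr U0" "U \<subseteq> U0" "U \<noteq> {}"
    and "i \<in> U" "a i \<le> max c (Min (a ` U))"
    and "\<forall>j\<in>U. a j \<le> max c (Min (a ` U)) \<longrightarrow> j \<noteq> i \<longrightarrow> pr i j"
  shows "snd (next_service a pr U c) = i"
proof (rule ccontr)
  let ?i = "snd (next_service a pr U c)"
  assume ne: "?i \<noteq> i"
  have N: "?i \<in> U" "a ?i \<le> max c (Min (a ` U))" "\<forall>j\<in>U. a j \<le> max c (Min (a ` U)) \<longrightarrow> j \<noteq> ?i \<longrightarrow> pr ?i j"
    using ns_snd[OF assms(1,2,3), of c] by auto
  have "pr i ?i" using N assms(6) ne by auto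
  moreover have "pr ?i i" using N assms(4,5) ne by auto
  moreover have "i \<in> U0" "?i \<in> U0" using N assms(2,4) by auto
  ultimately show False using qwf_asym[OF assms(1)] by blast
qed


context
  fixes a :: "cust \<Rightarrow> real" and pr :: "cust \<Rightarrow> cust \<Rightarrow> bool" and S :: "cust \<Rightarrow> real" and U0 :: "cust set"
begin

definition "Us k = fst (snd (run a pr S U0 k))"
definition "cs k = fst (run a pr S U0 k)"
definition "sts k = snd (snd (run a pr S U0 k))"
definition "tm k = fst (next_service a pr (Us k) (cs k))"
definition "ch k = snd (next_service a pr (Us k) (cs k))"

lemma run_Suc_eq:
  "run a pr S U0 (Suc k) = (if Us k = {} then run a pr S U0 k
     else (tm k + S (ch k), Us k - {ch k}, (sts k)(ch k := tm k)))"
  by (simp add: Us_def cs_def sts_def tm_def ch_def split: prod.splits)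

lemma Us_0: "Us 0 = U0" by (simp add: Us_def)
lemma sts_0: "sts 0 = (\<lambda>_. 0)" by (simp add: sts_def)
lemma cs_0: "cs 0 = 0" by (simp add: cs_def)

lemma Us_Suc: "Us k \<noteq> {} \<Longrightarrow> Us (Suc k) = Us k - {ch k}"
  unfolding Us_def[of "Suc k"] run_Suc_eq by simp
lemma cs_Suc: "Us k \<noteq> {} \<Longrightarrow> cs (Suc k) = tm k + S (ch k)"
  unfolding cs_def[of "Suc k"] run_Suc_eq by simp
lemma sts_Suc: "Us k \<noteq> {} \<Longrightarrow> sts (Suc k) = (sts k)(ch k := tm k)"
  unfolding sts_def[of "Suc k"] run_Suc_eq by simp
lemma Us_Suc_empty: "Us k = {} \<Longrightarrow> Us (Suc k) = {}"
  unfolding Us_def[of "Suc k"] run_Suc_eq by simp (simp add: Us_def)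

lemma tm_eq: "tm k = max (cs k) (Min (a ` Us k))"
  by (simp add: tm_def ns_fst)

lemma Us_sub_Suc: "Us (Suc k) \<subseteq> Us k"
  by (cases "Us k = {}") (auto simp: Us_Suc Us_Suc_empty)

lemma Us_mono: "k \<le> k' \<Longrightarrow> Us k' \<subseteq> Us k"
proof (induction k' rule: dec_induct)
  case base then show ?case by simp
next
  case (step m) then show ?case using Us_sub_Suc[of m] by blast
qed

lemma Us_sub: "Us k \<subseteq> U0" using Us_mono[of 0 k] by (simp add: Us_0)

context
  assumes wf: "qwf a pr U0"
begin

lemma ch_props:
  assumes "Us k \<noteq> {}"
  shows "ch k \<in> Us k \<and> a (ch k) \<le> tm k \<and> (\<forall>j\<in>Us k. a j \<le> tm k \<longrightarrow> j \<noteq> ch k \<longrightarrow> pr (ch k) j)"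
  using ns_snd[OF wf Us_sub assms, of "cs k"] by (simp add: ch_def tm_eq)

lemma card_Us: "k \<le> card U0 \<Longrightarrow> card (Us k) = card U0 - k"
proof (induction k)
  case 0 then show ?case by (simp add: Us_0)
next
  case (Suc k)
  have fin: "finite (Us k)" using qwf_fin[OF wf] Us_sub finite_subset by blast
  have "card (Us k) > 0" using Suc by simp
  then have ne: "Us k \<noteq> {}" by auto
  then have "ch k \<in> Us k" using ch_props by blast
  then show ?case using Suc fin ne by (simp add: Us_Suc)
qed

lemma Us_ne: "k < card U0 \<Longrightarrow> Us k \<noteq> {}"
  using card_Us[of k] by auto

lemma Us_N: "Us (card U0) = {}"
proof -
  have "finite (Us (card U0))" using qwf_fin[OF wf] Us_sub finite_subset by blast
  then show ?thesis using card_Us[of "card U0"] by simp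
qed

lemma ch_in: "k < card U0 \<Longrightarrow> ch k \<in> Us k"
  using ch_props Us_ne by blast
lemma ch_arr: "k < card U0 \<Longrightarrow> a (ch k) \<le> tm k"
  using ch_props Us_ne by blast
lemma ch_top: "k < card U0 \<Longrightarrow> j \<in> Us k \<Longrightarrow> a j \<le> tm k \<Longrightarrow> j \<noteq> ch k \<Longrightarrow> pr (ch k) j"
  using ch_props Us_ne by blast

lemma ch_unique: "k < card U0 \<Longrightarrow> k' < card U0 \<Longrightarrow> ch k = ch k' \<Longrightarrow> k = k'"
proof (rule ccontr)
  assume *: "k < card U0" "k' < card U0" "ch k = ch k'" "k \<noteq> k'"
  { fix p q assume pq: "p < q" "q < card U0" "ch p = ch q"
    have "ch q \<in> Us q" using ch_in pq by simp
    moreover have "Us q \<subseteq> Us (Suc p)" using Us_mono pq by simp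
    moreover have "ch p \<notin> Us (Suc p)" using Us_Suc Us_ne pq by simp
    ultimately have False using pq by (metis subsetD) }
  then show False using * by (metis linorder_neqE_nat)
qed

lemma ch_exists: "i \<in> U0 \<Longrightarrow> \<exists>k<card U0. ch k = i"
proof -
  assume i: "i \<in> U0"
  define m where "m = (LEAST m. i \<notin> Us m)"
  have ex: "i \<notin> Us (card U0)" using Us_N by simp
  then have m1: "i \<notin> Us m" unfolding m_def by (rule LeastI)
  have m2: "m \<le> card U0" unfolding m_def using ex by (rule Least_le)
  have "m \<noteq> 0"
  proof
    assume "m = 0" then show False using i m1 by (simp add: Us_0)
  qed
  then obtain k where k: "m = Suc k" by (cases m) auto
  have "i \<in> Us k" using not_less_Least[of k "\<lambda>m. i \<notin> Us m"] k m_def by auto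
  moreover have "k < card U0" using m2 k by simp
  ultimately show ?thesis using m1 k Us_Suc[of k] Us_ne by (intro exI[of _ k]) auto
qed

lemma in_Us_before: "k' < card U0 \<Longrightarrow> k \<le> k' \<Longrightarrow> ch k' \<in> Us k"
  using ch_in Us_mono by blast

lemma sts_final_aux: "k < card U0 \<Longrightarrow> Suc k \<le> m \<Longrightarrow> m \<le> card U0 \<Longrightarrow> sts m (ch k) = tm k"
proof (induction m)
  case 0 then show ?case by simp
next
  case (Suc m)
  show ?case
  proof (cases "Suc k = Suc m")
    case True
    then show ?thesis using Suc.prems Us_ne[of k] by (simp add: sts_Suc)
  next
    case False
    then have m: "Suc k \<le> m" "m < card U0" using Suc.prems by auto
    have ne: "ch m \<noteq> ch k" using ch_unique[of m k] m Suc.prems by auto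
    have "sts (Suc m) = (sts m)(ch m := tm m)" using Us_ne[of m] m by (simp add: sts_Suc)
    then show ?thesis using Suc.IH m Suc.prems ne by simp
  qed
qed

lemma sts_final: "k < card U0 \<Longrightarrow> sts (card U0) (ch k) = tm k"
  using sts_final_aux[of k "card U0"] by simp

context
  assumes Snn: "\<forall>i\<in>U0. 0 \<le> S i"
begin

lemma S_ch_nn: "k < card U0 \<Longrightarrow> 0 \<le> S (ch k)"
proof -
  assume "k < card U0"
  then have "ch k \<in> U0" using ch_in Us_sub by blast
  then show ?thesis using Snn by blast
qed

lemma tm_Suc: "Suc k < card U0 \<Longrightarrow> tm k + S (ch k) \<le> tm (Suc k)"
  using Us_ne[of k] by (simp add: tm_eq cs_Suc)

lemma tm_step: "k < k' \<Longrightarrow> k' < card U0 \<Longrightarrow> tm k + S (ch k) \<le> tm k'"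
proof (induction k')
  case 0 then show ?case by simp
next
  case (Suc m)
  show ?case
  proof (cases "k = m")
    case True then show ?thesis using tm_Suc Suc.prems by simp
  next
    case False
    then have "tm k + S (ch k) \<le> tm m" using Suc by simp
    moreover have "tm m + S (ch m) \<le> tm (Suc m)" using tm_Suc Suc.prems by simp
    moreover have "0 \<le> S (ch m)" using S_ch_nn Suc.prems by simp
    ultimately show ?thesis by simp
  qed
qed

lemma tm_mono: "k \<le> k' \<Longrightarrow> k' < card U0 \<Longrightarrow> tm k \<le> tm k'"
proof (cases "k = k'")
  case False
  assume "k \<le> k'" "k' < card U0"
  then have "tm k + S (ch k) \<le> tm k'" using False by (intro tm_step) auto
  moreover have "0 \<le> S (ch k)" using S_ch_nn \<open>k \<le> k'\<close> \<open>k' < card U0\<close> by simp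
  ultimately show ?thesis by simp
qed simp

end

lemma before:
  assumes "k < card U0" "j < card U0" "ch k = g" "ch j = ob" "ob \<noteq> g" "a ob \<le> a g" "\<not> pr g ob"
  shows "j < k"
proof (rule ccontr)
  assume "\<not> j < k"
  then have "k \<le> j" by simp
  then have "ob \<in> Us k" using in_Us_before assms by blast
  moreover have "a ob \<le> tm k" using ch_arr[of k] assms by simp
  ultimately have "pr g ob" using ch_top[of k ob] assms by simp
  then show False using assms by simp
qed

end
end


lemma Min_img_mono:
  assumes "finite U" "U \<noteq> {}" "\<forall>i\<in>U. f i \<le> (g::'a \<Rightarrow> real) i"
  shows "Min (f ` U) \<le> Min (g ` U)"
proof -
  have "Min (g ` U) \<in> g ` U" using assms by simp
  then obtain i where "i \<in> U" "Min (g ` U) = g i" by auto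
  moreover have "Min (f ` U) \<le> f i" using assms \<open>i \<in> U\<close> by simp
  moreover have "f i \<le> g i" using assms \<open>i \<in> U\<close> by simp
  ultimately show ?thesis by linarith
qed

locale cmp =
  fixes aA aB :: "cust \<Rightarrow> real" and pA pB :: "cust \<Rightarrow> cust \<Rightarrow> bool" and S :: "cust \<Rightarrow> real"
    and U0 :: "cust set" and g :: cust
  assumes wfA: "qwf aA pA U0" and wfB: "qwf aB pB U0"
    and Snn: "\<forall>i\<in>U0. 0 \<le> S i"
    and gU: "g \<in> U0"
    and H1: "\<forall>i\<in>U0. i \<noteq> g \<longrightarrow> aA i = aB i"
    and H2: "aA g \<le> aB g"
    and H3: "\<forall>i\<in>U0. \<forall>j\<in>U0. i \<noteq> g \<longrightarrow> j \<noteq> g \<longrightarrow> pA i j = pB i j"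
    and H4: "\<forall>i\<in>U0. i \<noteq> g \<longrightarrow> pA i g \<longrightarrow> pB i g"
begin

abbreviation "N \<equiv> card U0"
abbreviation "UA \<equiv> Us aA pA S U0"
abbreviation "UB \<equiv> Us aB pB S U0"
abbreviation "cA \<equiv> cs aA pA S U0"
abbreviation "cB \<equiv> cs aB pB S U0"
abbreviation "tA \<equiv> tm aA pA S U0"
abbreviation "tB \<equiv> tm aB pB S U0"
abbreviation "chA \<equiv> ch aA pA S U0"
abbreviation "chB \<equiv> ch aB pB S U0"

lemma aAB: "i \<in> U0 \<Longrightarrow> aA i \<le> aB i"
  using H1 H2 by (cases "i = g") auto

lemma agree:
  assumes kA: "kA < N" "chA kA = g"
  shows "k \<le> kA \<Longrightarrow> run aA pA S U0 k = run aB pB S U0 k \<and>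
      (\<forall>j<k. chB j \<noteq> g \<and> tA j = tB j \<and> chA j = chB j)"
proof (induction k)
  case 0 then show ?case by simp
next
  case (Suc k)
  then have k: "k < kA" "k < N" using kA by auto
  have R: "run aA pA S U0 k = run aB pB S U0 k" and IH: "\<forall>j<k. chB j \<noteq> g \<and> tA j = tB j \<and> chA j = chB j"
    using Suc by auto
  have UAB: "UA k = UB k" using R by (simp add: Us_def)
  have cAB: "cA k = cB k" using R by (simp add: cs_def)
  have sAB: "sts aA pA S U0 k = sts aB pB S U0 k" using R by (simp add: sts_def)
  define U where "U = UA k"
  have neA: "UA k \<noteq> {}" using Us_ne[where S=S, OF wfA] k by simp
  have neB: "UB k \<noteq> {}" using Us_ne[where S=S, OF wfB] k by simp
  have finU: "finite U" using qwf_fin[OF wfA] Us_sub[of aA pA S U0 k] finite_subset U_def by blast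
  have UU0: "U \<subseteq> U0" using Us_sub U_def by blast
  have chAg: "chA k \<noteq> g" using ch_unique[where S=S, OF wfA, of k kA] k kA by auto
  have gUk: "g \<in> U" using in_Us_before[where S=S, OF wfA, of kA k] kA k U_def by simp
  have chAU: "chA k \<in> U" using ch_in[where S=S, OF wfA] k U_def by simp
  have chBU: "chB k \<in> U" using ch_in[where S=S, OF wfB] k U_def UAB by simp
  have MinAB: "Min (aA ` U) \<le> Min (aB ` U)"
    using Min_img_mono[OF finU] neA U_def aAB UU0 by blast
  have tAB: "tA k \<le> tB k" using MinAB by (simp add: tm_eq U_def UAB cAB)
  have arrA: "aA (chA k) \<le> tA k" using ch_arr[where S=S, OF wfA] k by simp
  have arrB: "aB (chB k) \<le> tB k" using ch_arr[where S=S, OF wfB] k by simp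
  have eqa: "aA (chA k) = aB (chA k)" using H1 chAg chAU UU0 by auto
  have "Min (aB ` U) \<le> aB (chA k)" using finU chAU by simp
  moreover have "cA k \<le> tA k" by (simp add: tm_eq)
  ultimately have "tB k \<le> tA k" using arrA eqa by (simp add: tm_eq U_def UAB cAB)
  then have teq: "tA k = tB k" using tAB by simp
  have chBg: "chB k \<noteq> g"
  proof
    assume cg: "chB k = g"
    then have "aB g \<le> tB k" using arrB by simp
    then have "aA g \<le> tA k" using H2 teq by simp
    then have "pA (chA k) g" using ch_top[where S=S, OF wfA, of k g] k gUk U_def chAg by simp
    then have "pB (chA k) g" using H4 chAU UU0 chAg by auto
    moreover have "pB g (chA k)" using ch_top[where S=S, OF wfB, of k "chA k"] k chAU U_def UAB arrA eqa teq cg chAg by simp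
    ultimately show False using qwf_asym[OF wfB] chAU UU0 gU by blast
  qed
  have cheq: "chA k = chB k"
  proof (rule ccontr)
    assume ne: "chA k \<noteq> chB k"
    have eqb: "aA (chB k) = aB (chB k)" using H1 chBg chBU UU0 by auto
    have "pA (chA k) (chB k)" using ch_top[where S=S, OF wfA, of k "chB k"] k chBU U_def eqb arrB teq ne by simp
    then have "pB (chA k) (chB k)" using H3 chAU chBU UU0 chAg chBg by auto
    moreover have "pB (chB k) (chA k)" using ch_top[where S=S, OF wfB, of k "chA k"] k chAU U_def UAB arrA eqa teq ne by simp
    ultimately show False using qwf_asym[OF wfB] chAU chBU UU0 by blast
  qed
  have "run aA pA S U0 (Suc k) = run aB pB S U0 (Suc k)"
    using neA neB UAB sAB teq cheq
    unfolding run_Suc_eq[where a=aA and pr=pA] run_Suc_eq[where a=aB and pr=pB] by simp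
  moreover have "\<forall>j<Suc k. chB j \<noteq> g \<and> tA j = tB j \<and> chA j = chB j"
    using IH chBg teq cheq less_Suc_eq by auto
  ultimately show ?case by simp
qed

lemma compare:
  assumes kA: "kA < N" "chA kA = g" and kB: "kB < N" "chB kB = g"
  shows "kA \<le> kB \<and> tA kA \<le> tB kA \<and> tA kA \<le> tB kB"
proof -
  have A: "run aA pA S U0 kA = run aB pB S U0 kA" "\<forall>j<kA. chB j \<noteq> g \<and> tA j = tB j \<and> chA j = chB j"
    using agree[OF kA, of kA] by auto
  have le: "kA \<le> kB" using A(2) kB(2) not_le by blast
  have UAB: "UA kA = UB kA" using A by (simp add: Us_def)
  have cAB: "cA kA = cB kA" using A by (simp add: cs_def)
  have finU: "finite (UA kA)" using qwf_fin[OF wfA] Us_sub[of aA pA S U0 kA] finite_subset by blast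
  have ne: "UA kA \<noteq> {}" using Us_ne[where S=S, OF wfA] kA by simp
  have "Min (aA ` UA kA) \<le> Min (aB ` UA kA)"
    using Min_img_mono[OF finU ne] aAB Us_sub by blast
  then have t1: "tA kA \<le> tB kA" by (simp add: tm_eq UAB cAB)
  have "tB kA \<le> tB kB" using tm_mono[where S=S, OF wfB Snn le kB(1)] .
  then show ?thesis using le t1 by simp
qed

lemma compare_extra:
  assumes kA: "kA < N" "chA kA = g" and kB: "kB < N" "chB kB = g"
    and ob: "ob \<in> U0" "ob \<noteq> g" "pB ob g" "pA g ob" "aB ob \<le> aB g" "aA g \<le> aB ob"
  shows "tA kA + S ob \<le> tB kB"
proof -
  have A: "\<forall>j<kA. chB j \<noteq> g \<and> tA j = tB j \<and> chA j = chB j"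
    using agree[OF kA, of kA] by auto
  obtain jB where jB: "jB < N" "chB jB = ob" using ch_exists[where S=S, OF wfB ob(1)] by blast
  have npg: "\<not> pB g ob" using qwf_asym[OF wfB] ob gU by blast
  have jk: "jB < kB" using before[where S=S, OF wfB kB(1) jB(1) kB(2) jB(2) ob(2) ob(5) npg] .
  have kj: "kA \<le> jB"
  proof (rule ccontr)
    assume "\<not> kA \<le> jB"
    then have j: "jB < kA" by simp
    then have c1: "chA jB = ob" "tA jB = tB jB" using A jB by auto
    have "aB ob \<le> tB jB" using ch_arr[where S=S, OF wfB jB(1)] jB by simp
    then have "aA g \<le> tA jB" using ob c1 by simp
    moreover have "g \<in> UA jB" using in_Us_before[where S=S, OF wfA kA(1), of jB] kA j by simp
    ultimately have "pA ob g" using ch_top[where S=S, OF wfA, of jB g] j kA c1 ob by simp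
    then show False using qwf_asym[OF wfA] ob gU by blast
  qed
  have "tA kA \<le> tB kA" using compare[OF kA kB] by simp
  also have "\<dots> \<le> tB jB" using tm_mono[where S=S, OF wfB Snn kj jB(1)] .
  finally show ?thesis using tm_step[where S=S, OF wfB Snn jk kB(1)] jB by simp
qed

end



lemma sorted_nth_neq: "sorted_wrt (<) (tau::real list) \<Longrightarrow> j < length tau \<Longrightarrow> k < length tau \<Longrightarrow> j \<noteq> k \<Longrightarrow> tau ! j < tau ! k \<or> tau ! k < tau ! j"
  by (metis linorder_neqE_nat sorted_wrt_nth_less)

lemma qwf_prec:
  assumes st: "sorted_wrt (<) tau" and rk: "inj_on rk {..n}"
  shows "qwf (arr tau w) (prec tau w rk) (customers (length tau) n)"
  unfolding qwf_def
proof (intro conjI ballI impI)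
  show "finite (customers (length tau) n)" by (simp add: customers_def)
next
  fix i j assume ij: "i \<in> customers (length tau) n" "j \<in> customers (length tau) n" "i \<noteq> j"
  show "prec tau w rk i j \<or> prec tau w rk j i"
  proof (cases i)
    case (Inl i1) note ii = this
    show ?thesis
    proof (cases j)
      case (Inl j1) then show ?thesis using ii ij sorted_nth_neq[OF st, of i1 j1] by (auto simp: prec_def customers_def)
    next
      case (Inr j1) then show ?thesis using ii by (simp add: prec_def)
    qed
  next
    case (Inr i1) note ii = this
    show ?thesis
    proof (cases j)
      case (Inl j1) then show ?thesis using ii by (simp add: prec_def)
    next
      case (Inr j1)
      then have "rk i1 \<noteq> rk j1" using ii ij rk by (auto simp: customers_def inj_on_def)
      then show ?thesis using ii Inr by (auto simp: prec_def)
    qed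
  qed
next
  fix i j assume "i \<in> customers (length tau) n" "j \<in> customers (length tau) n" "prec tau w rk i j"
  then show "\<not> prec tau w rk j i"
    by (auto simp: prec_def split: sum.splits)
next
  fix i j k assume "i \<in> customers (length tau) n" "j \<in> customers (length tau) n" "k \<in> customers (length tau) n"
    "prec tau w rk i j" "prec tau w rk j k"
  then show "prec tau w rk i k"
    by (auto simp: prec_def split: sum.splits)
qed

definition "wt t n x = (\<lambda>i. if i = n then t else x i)"

lemma tagged_wait_eq:
  fixes t :: real and x :: "nat \<Rightarrow> real" and S :: "cust \<Rightarrow> real"
  assumes st: "sorted_wrt (<) tau" and rk: "rk permutes {..n}"
  defines "a \<equiv> arr tau (wt t n x)" and "pr \<equiv> prec tau (wt t n x) rk" and "U0 \<equiv> customers (length tau) n"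
  shows "\<exists>k < card U0. ch a pr S U0 k = Inr n \<and> tagged_wait tau t n x rk S = tm a pr S U0 k - t"
proof -
  have inj: "inj_on rk {..n}" using rk permutes_inj_on by blast
  have wf: "qwf a pr U0" unfolding a_def pr_def U0_def by (rule qwf_prec[OF st inj])
  have "Inr n \<in> U0" by (simp add: U0_def customers_def)
  then obtain k where k: "k < card U0" "ch a pr S U0 k = Inr n" using ch_exists[OF wf] by blast
  have "tagged_wait tau t n x rk S = sts a pr S U0 (card U0) (Inr n) - t"
    by (simp add: tagged_wait_def Let_def sts_def a_def pr_def U0_def wt_def)
  also have "\<dots> = tm a pr S U0 k - t" using sts_final[where S=S, OF wf k(1)] k(2) by simp
  finally show ?thesis using k by blast
qed


lemma path_i:
  fixes t t' :: real and x :: "nat \<Rightarrow> real" and S :: "cust \<Rightarrow> real"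
  assumes st: "sorted_wrt (<) tau" and rk: "rk permutes {..n}"
    and Snn: "\<forall>i\<in>customers (length tau) n. 0 \<le> S i" and tt: "t' < t"
  shows "ennreal (tagged_wait tau t' n x rk S) + (if 1 \<le> n \<and> x 0 = t \<and> rk 0 < rk n then ennreal (S (Inr 0)) else 0)
     \<le> ennreal (tagged_wait tau t n x rk S) + ennreal (t - t')"
proof -
  define aA where "aA = arr tau (wt t' n x)"
  define pA where "pA = prec tau (wt t' n x) rk"
  define aB where "aB = arr tau (wt t n x)"
  define pB where "pB = prec tau (wt t n x) rk"
  define U0 where "U0 = customers (length tau) n"
  have inj: "inj_on rk {..n}" using rk permutes_inj_on by blast
  have wfA: "qwf aA pA U0" unfolding aA_def pA_def U0_def by (rule qwf_prec[OF st inj])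
  have wfB: "qwf aB pB U0" unfolding aB_def pB_def U0_def by (rule qwf_prec[OF st inj])
  have gU: "Inr n \<in> U0" by (simp add: U0_def customers_def)
  interpret cmp aA aB pA pB S U0 "Inr n"
  proof
    show "\<forall>i\<in>U0. 0 \<le> S i" using Snn U0_def by simp
    show "\<forall>i\<in>U0. i \<noteq> Inr n \<longrightarrow> aA i = aB i"
      by (auto simp: aA_def aB_def arr_def wt_def split: sum.splits)
    show "aA (Inr n) \<le> aB (Inr n)" using tt by (simp add: aA_def aB_def arr_def wt_def)
    show "\<forall>i\<in>U0. \<forall>j\<in>U0. i \<noteq> Inr n \<longrightarrow> j \<noteq> Inr n \<longrightarrow> pA i j = pB i j"
      by (auto simp: pA_def pB_def prec_def wt_def split: sum.splits)
    show "\<forall>i\<in>U0. i \<noteq> Inr n \<longrightarrow> pA i (Inr n) \<longrightarrow> pB i (Inr n)"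
      using tt by (auto simp: pA_def pB_def prec_def wt_def split: sum.splits)
  qed (use wfA wfB gU in auto)
  obtain kA where kA: "kA < card U0" "chA kA = Inr n" "tagged_wait tau t' n x rk S = tA kA - t'"
    using tagged_wait_eq[OF st rk, of t' x S] unfolding aA_def pA_def U0_def by blast
  obtain kB where kB: "kB < card U0" "chB kB = Inr n" "tagged_wait tau t n x rk S = tB kB - t"
    using tagged_wait_eq[OF st rk, of t x S] unfolding aB_def pB_def U0_def by blast
  have c: "tA kA \<le> tB kB" using compare[OF kA(1,2) kB(1,2)] by simp
  have arA: "t' \<le> tA kA" using ch_arr[where S=S, OF wfA kA(1)] kA(2) by (simp add: aA_def arr_def wt_def)
  have arB: "t \<le> tB kB" using ch_arr[where S=S, OF wfB kB(1)] kB(2) by (simp add: aB_def arr_def wt_def)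
  define G where "G = (if 1 \<le> n \<and> x 0 = t \<and> rk 0 < rk n then S (Inr 0) else 0)"
  have G0: "0 \<le> G" using assms(3) by (auto simp: G_def customers_def)
  have GG: "tA kA + G \<le> tB kB"
  proof (cases "1 \<le> n \<and> x 0 = t \<and> rk 0 < rk n")
    case True
    have "tA kA + S (Inr 0) \<le> tB kB"
    proof (rule compare_extra[OF kA(1,2) kB(1,2)])
      show "Inr 0 \<in> U0" by (simp add: U0_def customers_def)
      show "Inr 0 \<noteq> (Inr n :: cust)" using True by simp
      show "pB (Inr 0) (Inr n)" using True by (simp add: pB_def prec_def wt_def)
      show "pA (Inr n) (Inr 0)" using True tt by (simp add: pA_def prec_def wt_def)
      show "aB (Inr 0) \<le> aB (Inr n)" using True by (simp add: aB_def arr_def wt_def)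
      show "aA (Inr n) \<le> aB (Inr 0)" using True tt by (simp add: aA_def aB_def arr_def wt_def)
    qed
    then show ?thesis using True by (simp add: G_def)
  next
    case False
    then have "G = 0" unfolding G_def by meson
    then show ?thesis using c by simp
  qed
  have "ennreal (tagged_wait tau t' n x rk S) + (if 1 \<le> n \<and> x 0 = t \<and> rk 0 < rk n then ennreal (S (Inr 0)) else 0)
      = ennreal (tA kA - t') + ennreal G" using kA by (simp add: G_def)
  also have "\<dots> = ennreal (tA kA - t' + G)" using arA G0 by (simp add: ennreal_plus)
  also have "\<dots> \<le> ennreal (tB kB - t + (t - t'))" using GG by (intro ennreal_leI) simp
  also have "\<dots> = ennreal (tB kB - t) + ennreal (t - t')" using arB tt by (subst ennreal_plus[symmetric]) auto
  finally show ?thesis using kB by simp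
qed

lemma path_iia:
  fixes x :: "nat \<Rightarrow> real" and S :: "cust \<Rightarrow> real"
  assumes st: "sorted_wrt (<) tau" and rk: "rk permutes {..n}" and tne: "tau \<noteq> []" and t0: "tau ! 0 > 0"
    and xp: "\<forall>i<n. 0 < x i"
  shows "tagged_wait tau 0 n x rk S = 0"
proof -
  define a where "a = arr tau (wt 0 n x)"
  define pr where "pr = prec tau (wt 0 n x) rk"
  define U0 where "U0 = customers (length tau) n"
  have inj: "inj_on rk {..n}" using rk permutes_inj_on by blast
  have wf: "qwf a pr U0" unfolding a_def pr_def U0_def by (rule qwf_prec[OF st inj])
  have gU: "Inr n \<in> U0" by (simp add: U0_def customers_def)
  have fin: "finite U0" by (simp add: U0_def customers_def)
  have pos: "0 < a j" if "j \<in> U0" "j \<noteq> Inr n" for j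
  proof (cases j)
    case (Inl j1)
    then have j1: "j1 < length tau" using that by (auto simp: U0_def customers_def)
    have "tau ! 0 \<le> tau ! j1"
      using sorted_wrt_nth_less[OF st, of 0 j1] j1 by (cases "j1 = 0") auto
    then show ?thesis using t0 Inl by (simp add: a_def arr_def)
  next
    case (Inr j1)
    then have "j1 < n" using that by (auto simp: U0_def customers_def)
    then show ?thesis using xp Inr by (simp add: a_def arr_def wt_def)
  qed
  have a0: "a (Inr n) = 0" by (simp add: a_def arr_def wt_def)
  have M: "Min (a ` U0) = 0"
  proof (rule Min_eqI)
    show "finite (a ` U0)" using fin by simp
    show "0 \<in> a ` U0" using gU a0 by force
  next
    fix y assume "y \<in> a ` U0"
    then obtain j where "j \<in> U0" "y = a j" by auto
    then show "0 \<le> y" using pos[of j] a0 by (cases "j = Inr n") force+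
  qed
  have tm0: "tm a pr S U0 0 = 0" by (simp add: tm_eq Us_0 cs_0 M)
  have ch0: "ch a pr S U0 0 = Inr n"
    unfolding ch_def Us_0 cs_0
  proof (rule ns_snd_unique[OF wf])
    show "U0 \<subseteq> U0" "U0 \<noteq> {}" "Inr n \<in> U0" using gU by auto
    show "a (Inr n) \<le> max 0 (Min (a ` U0))" using a0 M by simp
    show "\<forall>j\<in>U0. a j \<le> max 0 (Min (a ` U0)) \<longrightarrow> j \<noteq> Inr n \<longrightarrow> pr (Inr n) j"
      using pos M by force
  qed
  have N: "0 < card U0" using gU fin card_gt_0_iff by blast
  have "tagged_wait tau 0 n x rk S = sts a pr S U0 (card U0) (Inr n) - 0"
    by (simp add: tagged_wait_def Let_def sts_def a_def pr_def U0_def wt_def)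
  also have "\<dots> = 0" using sts_final[where S=S, OF wf N] ch0 tm0 by simp
  finally show ?thesis .
qed

lemma path_iic:
  fixes x :: "nat \<Rightarrow> real" and S :: "cust \<Rightarrow> real" and m :: real
  assumes st: "sorted_wrt (<) tau" and rk: "rk permutes {..n}"
    and Snn: "\<forall>i\<in>customers (length tau) n. 0 \<le> S i" and n1: "1 \<le> n" and x0: "0 \<le> x 0" "x 0 < m"
  shows "S (Inr 0) - m \<le> tagged_wait tau m n x rk S"
proof -
  define a where "a = arr tau (wt m n x)"
  define pr where "pr = prec tau (wt m n x) rk"
  define U0 where "U0 = customers (length tau) n"
  have inj: "inj_on rk {..n}" using rk permutes_inj_on by blast
  have wf: "qwf a pr U0" unfolding a_def pr_def U0_def by (rule qwf_prec[OF st inj])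
  have Snn': "\<forall>i\<in>U0. 0 \<le> S i" using Snn U0_def by simp
  obtain k where k: "k < card U0" "ch a pr S U0 k = Inr n" "tagged_wait tau m n x rk S = tm a pr S U0 k - m"
    using tagged_wait_eq[OF st rk, of m x S] unfolding a_def pr_def U0_def by blast
  have oU: "Inr 0 \<in> U0" by (simp add: U0_def customers_def)
  obtain j where j: "j < card U0" "ch a pr S U0 j = Inr 0" using ch_exists[where S=S, OF wf oU] by blast
  have ne: "Inr 0 \<noteq> (Inr n :: cust)" using n1 by simp
  have le: "a (Inr 0) \<le> a (Inr n)" using n1 x0 by (simp add: a_def arr_def wt_def)
  have np: "\<not> pr (Inr n) (Inr 0)" using n1 x0 by (simp add: pr_def prec_def wt_def)
  have jk: "j < k" using before[where S=S, OF wf k(1) j(1) k(2) j(2) ne le np] .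
  have "tm a pr S U0 j + S (Inr 0) \<le> tm a pr S U0 k" using tm_step[where S=S, OF wf Snn' jk k(1)] j by simp
  moreover have "a (Inr 0) \<le> tm a pr S U0 j" using ch_arr[where S=S, OF wf j(1)] j by simp
  moreover have "a (Inr 0) = x 0" using n1 by (simp add: a_def arr_def wt_def)
  ultimately show ?thesis using k x0 by simp
qed



lemma nn_superadd:
  "integral\<^sup>N M f + integral\<^sup>N M g \<le> integral\<^sup>N M (\<lambda>x. f x + g x)"
proof -
  let ?A = "{s. simple_function M s \<and> s \<le> f}" and ?B = "{s. simple_function M s \<and> s \<le> g}"
  have neA: "?A \<noteq> {}" by (auto intro!: exI[of _ "\<lambda>_. 0"] simp: le_fun_def)
  have neB: "?B \<noteq> {}" by (auto intro!: exI[of _ "\<lambda>_. 0"] simp: le_fun_def)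
  have "integral\<^sup>N M f + integral\<^sup>N M g = (SUP s\<in>?A. integral\<^sup>S M s + integral\<^sup>N M g)"
    unfolding nn_integral_def[of M f] using ennreal_SUP_add_left[OF neA] by simp
  also have "\<dots> \<le> integral\<^sup>N M (\<lambda>x. f x + g x)"
  proof (rule SUP_least)
    fix s assume s: "s \<in> ?A"
    have "integral\<^sup>S M s + integral\<^sup>N M g = (SUP r\<in>?B. integral\<^sup>S M s + integral\<^sup>S M r)"
      unfolding nn_integral_def[of M g] using ennreal_SUP_add_right[OF neB] by simp
    also have "\<dots> \<le> integral\<^sup>N M (\<lambda>x. f x + g x)"
    proof (rule SUP_least)
      fix r assume r: "r \<in> ?B"
      have "integral\<^sup>S M s + integral\<^sup>S M r = integral\<^sup>S M (\<lambda>x. s x + r x)"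
        using s r by (simp add: simple_integral_add)
      also have "\<dots> = integral\<^sup>N M (\<lambda>x. s x + r x)"
        using s r by (intro nn_integral_eq_simple_integral[symmetric]) auto
      also have "\<dots> \<le> integral\<^sup>N M (\<lambda>x. f x + g x)"
        using s r by (intro nn_integral_mono add_mono) (auto simp: le_fun_def)
      finally show "integral\<^sup>S M s + integral\<^sup>S M r \<le> integral\<^sup>N M (\<lambda>x. f x + g x)" .
    qed
    finally show "integral\<^sup>S M s + integral\<^sup>N M g \<le> integral\<^sup>N M (\<lambda>x. f x + g x)" .
  qed
  finally show ?thesis .
qed

lemma enn_diff_le: "(a::ennreal) \<le> b + c \<Longrightarrow> c \<noteq> top \<Longrightarrow> a - c \<le> b"
  by (auto simp: ennreal_minus_le_iff add.commute)

lemma nn_add_const: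
  assumes ct: "c \<noteq> top"
  shows "integral\<^sup>N M (\<lambda>x. h x + c) \<le> integral\<^sup>N M h + c * emeasure M (space M)"
  unfolding nn_integral_def[of M "\<lambda>x. h x + c"]
proof (rule SUP_least)
  fix s assume s: "s \<in> {g. simple_function M g \<and> g \<le> (\<lambda>x. h x + c)}"
  have sf: "simple_function M s" and sle: "\<And>x. s x \<le> h x + c" using s by (auto simp: le_fun_def)
  have sf2: "simple_function M (\<lambda>x. s x - c)" using simple_function_compose1[OF sf, of "\<lambda>y. y - c"] .
  have sf3: "simple_function M (\<lambda>x. (s x - c) + c)" using simple_function_compose1[OF sf, of "\<lambda>y. y - c + c"] .
  have "integral\<^sup>S M s \<le> integral\<^sup>S M (\<lambda>x. (s x - c) + c)"
    by (rule simple_integral_mono[OF sf sf3]) (auto simp: diff_add_self_ennreal)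
  also have "\<dots> = integral\<^sup>S M (\<lambda>x. s x - c) + c * emeasure M (space M)"
    using sf2 by (subst simple_integral_add) auto
  also have "integral\<^sup>S M (\<lambda>x. s x - c) = integral\<^sup>N M (\<lambda>x. s x - c)"
    using sf2 by (intro nn_integral_eq_simple_integral[symmetric]) auto
  also have "\<dots> \<le> integral\<^sup>N M h"
    using sle ct by (intro nn_integral_mono enn_diff_le) simp_all
  finally show "integral\<^sup>S M s \<le> integral\<^sup>N M h + c * emeasure M (space M)" by (simp add: add_right_mono)
qed

lemma int_ineq:
  assumes "prob_space M" and "AE x in M. f x + g x \<le> h x + c" and ct: "c \<noteq> top"
  shows "integral\<^sup>N M f + integral\<^sup>N M g \<le> integral\<^sup>N M h + c"
proof -
  have "integral\<^sup>N M f + integral\<^sup>N M g \<le> integral\<^sup>N M (\<lambda>x. f x + g x)" by (rule nn_superadd)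
  also have "\<dots> \<le> integral\<^sup>N M (\<lambda>x. h x + c)" using assms(2) by (rule nn_integral_mono_AE)
  also have "\<dots> \<le> integral\<^sup>N M h + c * emeasure M (space M)" by (rule nn_add_const[OF ct])
  also have "\<dots> = integral\<^sup>N M h + c" using prob_space.emeasure_space_1[OF assms(1)] by simp
  finally show ?thesis .
qed

lemma summable_enn: "summable (f :: nat \<Rightarrow> ennreal)" by (rule summableI)

lemma poisson_sum1: "(\<Sum>n. ennreal (pmf (poisson_pmf lam) n)) = 1"
proof -
  have "(\<Sum>n. ennreal (pmf (poisson_pmf lam) n)) = (\<integral>\<^sup>+ n. ennreal (pmf (poisson_pmf lam) n) \<partial>count_space UNIV)"
    by (simp add: nn_integral_count_space_nat)
  also have "\<dots> = emeasure (measure_pmf (poisson_pmf lam)) UNIV" by (rule nn_integral_pmf)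
  also have "\<dots> = 1" using measure_pmf.emeasure_space_1[of "poisson_pmf lam"] by simp
  finally show ?thesis .
qed

lemma prob_exp: "0 < mu \<Longrightarrow> prob_space (exp_service mu)"
  unfolding exp_service_def by (rule prob_space_exponential_density)

lemma AE_exp_nn: "0 < mu \<Longrightarrow> AE s in exp_service mu. 0 \<le> s"
  unfolding exp_service_def
  by (subst AE_density) (auto intro!: AE_I2 simp: not_less exponential_density_def split: if_splits)

lemma AE_S_nn:
  assumes "0 < mu" "finite I"
  shows "AE S in PiM I (\<lambda>_. exp_service mu). \<forall>i\<in>I. 0 \<le> S i"
proof (rule eventually_ball_finite[OF assms(2)], intro ballI)
  fix i assume "i \<in> I"
  show "AE S in PiM I (\<lambda>_. exp_service mu). 0 \<le> S i"
    using AE_PiM_component[of I "\<lambda>_. exp_service mu" i "\<lambda>s. 0 \<le> s"] prob_exp[OF assms(1)] AE_exp_nn[OF assms(1)] \<open>i \<in> I\<close>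
    by simp
qed

lemma AE_rk: "AE rk in measure_pmf (pmf_of_set {rk. rk permutes {..(n::nat)}}). rk permutes {..n}"
proof -
  have "finite {rk. rk permutes {..n}}" by (rule finite_permutations) simp
  moreover have "{rk. rk permutes {..n}} \<noteq> {}" using permutes_id by blast
  ultimately show ?thesis by (simp add: AE_measure_pmf_iff)
qed

lemma prob_PiM: "(\<And>i. prob_space (M i)) \<Longrightarrow> prob_space (PiM I M)"
  by (rule prob_space_PiM) auto



definition "Gtot tau mu lam P t = (\<Sum>n. ennreal (pmf (poisson_pmf lam) n) *
   (\<integral>\<^sup>+ x. (\<integral>\<^sup>+ rk. (\<integral>\<^sup>+ S. (if 1 \<le> n \<and> x 0 = t \<and> rk 0 < rk n then ennreal (S (Inr 0)) else 0)
      \<partial>(PiM (customers (length tau) n) (\<lambda>_. exp_service mu)))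
    \<partial>(measure_pmf (pmf_of_set {rk. rk permutes {..n}})))
   \<partial>(PiM {..<n} (\<lambda>_. P))))"

lemma fin_cust: "finite (customers M n)" by (simp add: customers_def)

lemma main_i:
  assumes st: "sorted_wrt (<) tau" and mu: "0 < mu" and tt: "t' < t" and P: "prob_space P"
  shows "exp_wait tau mu lam P t' + Gtot tau mu lam P t \<le> exp_wait tau mu lam P t + ennreal (t - t')"
proof -
  define e where "e = ennreal (t - t')"
  have et: "e \<noteq> top" by (simp add: e_def)
  define MS where "MS n = PiM (customers (length tau) n) (\<lambda>_. exp_service mu)" for n :: nat
  define MR where "MR n = measure_pmf (pmf_of_set {rk. rk permutes {..(n::nat)}})" for n
  define MX where "MX n = PiM {..<n} (\<lambda>_. P)" for n :: nat
  define F where "F s n = (\<integral>\<^sup>+ x. (\<integral>\<^sup>+ rk. (\<integral>\<^sup>+ S. ennreal (tagged_wait tau s n x rk S) \<partial>MS n) \<partial>MR n) \<partial>MX n)" for s :: real and n :: nat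
  define G where "G n = (\<integral>\<^sup>+ x. (\<integral>\<^sup>+ rk. (\<integral>\<^sup>+ S. (if 1 \<le> n \<and> x 0 = t \<and> rk 0 < rk n then ennreal (S (Inr 0)) else 0)
      \<partial>MS n) \<partial>MR n) \<partial>MX n)" for n :: nat
  have pS: "prob_space (MS n)" for n unfolding MS_def by (rule prob_PiM) (rule prob_exp[OF mu])
  have pR: "prob_space (MR n)" for n unfolding MR_def by (rule measure_pmf.prob_space_axioms)
  have pX: "prob_space (MX n)" for n unfolding MX_def by (rule prob_PiM) (rule P)
  have lev: "F t' n + G n \<le> F t n + e" for n
    unfolding F_def G_def
  proof (rule int_ineq[OF pX _ et], rule AE_I2)
    fix x
    show "(\<integral>\<^sup>+ rk. (\<integral>\<^sup>+ S. ennreal (tagged_wait tau t' n x rk S) \<partial>MS n) \<partial>MR n) +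
          (\<integral>\<^sup>+ rk. (\<integral>\<^sup>+ S. (if 1 \<le> n \<and> x 0 = t \<and> rk 0 < rk n then ennreal (S (Inr 0)) else 0) \<partial>MS n) \<partial>MR n)
        \<le> (\<integral>\<^sup>+ rk. (\<integral>\<^sup>+ S. ennreal (tagged_wait tau t n x rk S) \<partial>MS n) \<partial>MR n) + e"
    proof (rule int_ineq[OF pR _ et])
      show "AE rk in MR n. (\<integral>\<^sup>+ S. ennreal (tagged_wait tau t' n x rk S) \<partial>MS n) +
          (\<integral>\<^sup>+ S. (if 1 \<le> n \<and> x 0 = t \<and> rk 0 < rk n then ennreal (S (Inr 0)) else 0) \<partial>MS n)
          \<le> (\<integral>\<^sup>+ S. ennreal (tagged_wait tau t n x rk S) \<partial>MS n) + e"
        using AE_rk[of n] unfolding MR_def[symmetric]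
      proof (rule AE_mp, intro AE_I2 impI)
        fix rk assume rk: "rk permutes {..n}"
        show "(\<integral>\<^sup>+ S. ennreal (tagged_wait tau t' n x rk S) \<partial>MS n) +
          (\<integral>\<^sup>+ S. (if 1 \<le> n \<and> x 0 = t \<and> rk 0 < rk n then ennreal (S (Inr 0)) else 0) \<partial>MS n)
          \<le> (\<integral>\<^sup>+ S. ennreal (tagged_wait tau t n x rk S) \<partial>MS n) + e"
        proof (rule int_ineq[OF pS _ et])
          show "AE S in MS n. ennreal (tagged_wait tau t' n x rk S) +
              (if 1 \<le> n \<and> x 0 = t \<and> rk 0 < rk n then ennreal (S (Inr 0)) else 0)
              \<le> ennreal (tagged_wait tau t n x rk S) + e"
            using AE_S_nn[OF mu fin_cust, of "length tau" n] unfolding MS_def[symmetric]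
          proof (rule AE_mp, intro AE_I2 impI)
            fix S :: "cust \<Rightarrow> real" assume "\<forall>i\<in>customers (length tau) n. 0 \<le> S i"
            then show "ennreal (tagged_wait tau t' n x rk S) +
              (if 1 \<le> n \<and> x 0 = t \<and> rk 0 < rk n then ennreal (S (Inr 0)) else 0)
              \<le> ennreal (tagged_wait tau t n x rk S) + e"
              using path_i[OF st rk _ tt, of S x] unfolding e_def by simp
          qed
        qed
      qed
    qed
  qed
  have ew: "exp_wait tau mu lam P s = (\<Sum>n. ennreal (pmf (poisson_pmf lam) n) * F s n)" for s
    unfolding exp_wait_def F_def MS_def MR_def MX_def ..
  have gt: "Gtot tau mu lam P t = (\<Sum>n. ennreal (pmf (poisson_pmf lam) n) * G n)"
    unfolding Gtot_def G_def MS_def MR_def MX_def ..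
  have "exp_wait tau mu lam P t' + Gtot tau mu lam P t
      = (\<Sum>n. ennreal (pmf (poisson_pmf lam) n) * F t' n + ennreal (pmf (poisson_pmf lam) n) * G n)"
    unfolding ew gt by (rule suminf_add[OF summable_enn summable_enn])
  also have "\<dots> \<le> (\<Sum>n. ennreal (pmf (poisson_pmf lam) n) * F t n + ennreal (pmf (poisson_pmf lam) n) * e)"
  proof (rule suminf_le[OF _ summable_enn summable_enn])
    fix n
    show "ennreal (pmf (poisson_pmf lam) n) * F t' n + ennreal (pmf (poisson_pmf lam) n) * G n
        \<le> ennreal (pmf (poisson_pmf lam) n) * F t n + ennreal (pmf (poisson_pmf lam) n) * e"
      using mult_left_mono[OF lev[of n], of "ennreal (pmf (poisson_pmf lam) n)"]
      by (simp add: distrib_left)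
  qed
  also have "\<dots> = exp_wait tau mu lam P t + (\<Sum>n. ennreal (pmf (poisson_pmf lam) n) * e)"
    unfolding ew by (rule suminf_add[OF summable_enn summable_enn, symmetric])
  also have "(\<Sum>n. ennreal (pmf (poisson_pmf lam) n) * e) = e"
    using poisson_sum1[of lam] by (simp add: ennreal_suminf_multc)
  finally show ?thesis unfolding e_def .
qed



lemma comp_int:
  assumes M: "\<And>i. i \<in> I \<Longrightarrow> prob_space (M i)" and i: "i \<in> I" and f: "f \<in> borel_measurable (M i)"
  shows "(\<integral>\<^sup>+ x. f (x i) \<partial>PiM I M) = (\<integral>\<^sup>+ y. f y \<partial>M i)"
proof -
  have D: "distr (PiM I M) (M i) (\<lambda>x. x i) = M i" by (rule distr_PiM_component) (use M i in auto)
  have "(\<integral>\<^sup>+ y. f y \<partial>M i) = (\<integral>\<^sup>+ y. f y \<partial>distr (PiM I M) (M i) (\<lambda>x. x i))"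
    using D by simp
  also have "\<dots> = (\<integral>\<^sup>+ x. f (x i) \<partial>PiM I M)"
    using f i D by (intro nn_integral_distr) (auto intro: measurable_component_singleton)
  finally show ?thesis by simp
qed

lemma posK:
  assumes m: "0 \<le> m" and mu: "0 < mu"
  shows "0 < (\<integral>\<^sup>+ s. ennreal (s - m) \<partial>exp_service mu)"
proof -
  define c where "c = mu * exp (- (m + 2) * mu)"
  have c0: "0 < c" using mu by (simp add: c_def)
  have "(\<integral>\<^sup>+ s. ennreal (s - m) \<partial>exp_service mu)
      = (\<integral>\<^sup>+ s. ennreal (exponential_density mu s) * ennreal (s - m) \<partial>lborel)"
    unfolding exp_service_def by (rule nn_integral_density) auto
  also have "\<dots> \<ge> (\<integral>\<^sup>+ s. ennreal c * indicator {m+1..m+2} s \<partial>lborel)"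
  proof (rule nn_integral_mono)
    fix s :: real
    show "ennreal c * indicator {m+1..m+2} s \<le> ennreal (exponential_density mu s) * ennreal (s - m)"
    proof (cases "s \<in> {m+1..m+2}")
      case True
      then have s: "m + 1 \<le> s" "s \<le> m + 2" by auto
      have "- (m + 2) * mu \<le> - s * mu" using s mu by (intro mult_right_mono) auto
      then have "exp (- (m + 2) * mu) \<le> exp (- s * mu)" by simp
      then have "c \<le> mu * exp (- s * mu)" using mu by (simp add: c_def)
      also have "\<dots> \<le> mu * exp (- s * mu) * (s - m)" using s mu by simp
      finally have "c \<le> exponential_density mu s * (s - m)" using s m by (simp add: exponential_density_def)
      moreover have "ennreal (exponential_density mu s * (s - m)) = ennreal (exponential_density mu s) * ennreal (s - m)"
        using s m mu by (intro ennreal_mult) (auto simp: exponential_density_def)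
      ultimately show ?thesis using True by (metis ennreal_leI indicator_simps(1) mult.right_neutral)
    qed simp
  qed
  finally have "ennreal c * emeasure lborel {m+1..m+2} \<le> (\<integral>\<^sup>+ s. ennreal (s - m) \<partial>exp_service mu)"
    by (simp add: nn_integral_cmult_indicator)
  moreover have "0 < ennreal c * emeasure lborel {m+1..m+2}" using c0 by simp
  ultimately show ?thesis by order
qed

lemma perm_card_pos: "0 < card {rk. rk permutes {..(n::nat)}}"
proof -
  have "finite {rk. rk permutes {..n}}" by (rule finite_permutations) simp
  moreover have "id \<in> {rk. rk permutes {..n}}" using permutes_id by blast
  ultimately show ?thesis using card_gt_0_iff by blast
qed

lemma Gtot_pos:
  fixes t :: real
  assumes mu: "0 < mu" and lam: "0 < lam" and P: "prob_space P" and Pt: "0 < emeasure P {t}"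
    and Ps: "sets P = sets borel"
  shows "0 < Gtot tau mu lam P t"
proof -
  define K where "K = (\<integral>\<^sup>+ s. ennreal (s - 0) \<partial>exp_service mu)"
  have K0: "0 < K" unfolding K_def by (rule posK[OF _ mu]) simp
  define C where "C = card {rk. rk permutes {..(1::nat)}}"
  have C0: "0 < C" unfolding C_def by (rule perm_card_pos)
  define K2 where "K2 = K / of_nat C"
  have K20: "0 < K2" using K0 C0 by (simp add: K2_def ennreal_zero_less_divide of_nat_less_top)
  have inner: "(\<integral>\<^sup>+ S. (if 1 \<le> (1::nat) \<and> x 0 = t \<and> rk 0 < rk 1 then ennreal (S (Inr 0)) else 0)
      \<partial>(PiM (customers (length tau) 1) (\<lambda>_. exp_service mu))) = (if x 0 = t \<and> rk 0 < rk 1 then K else 0)"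
    for x :: "nat \<Rightarrow> real" and rk :: "nat \<Rightarrow> nat"
  proof (cases "x 0 = t \<and> rk 0 < rk 1")
    case True
    have "(\<integral>\<^sup>+ S. ennreal (S (Inr 0)) \<partial>(PiM (customers (length tau) 1) (\<lambda>_. exp_service mu)))
        = (\<integral>\<^sup>+ s. ennreal s \<partial>exp_service mu)"
      by (rule comp_int[of _ "\<lambda>_. exp_service mu" "Inr 0" "\<lambda>s. ennreal s"])
         (auto simp: prob_exp[OF mu] customers_def exp_service_def prob_space_exponential_density[OF mu])
    then show ?thesis using True by (simp add: K_def)
  next
    case False
    then have "(\<lambda>S. (if 1 \<le> (1::nat) \<and> x 0 = t \<and> rk 0 < rk 1 then ennreal (S (Inr 0)) else 0)) = (\<lambda>S. 0)"
      by auto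
    note eqz = this
    have "(\<integral>\<^sup>+ S. (if 1 \<le> (1::nat) \<and> x 0 = t \<and> rk 0 < rk 1 then ennreal (S (Inr 0)) else 0)
      \<partial>(PiM (customers (length tau) 1) (\<lambda>_. exp_service mu))) = 0" unfolding eqz by simp
    moreover have "(if x 0 = t \<and> rk 0 < rk 1 then K else 0) = 0" using False by auto
    ultimately show ?thesis by (rule trans[OF _ sym])
  qed
  have rkl: "(\<integral>\<^sup>+ rk. (if x 0 = t \<and> rk 0 < rk 1 then K else 0) \<partial>measure_pmf (pmf_of_set {rk. rk permutes {..(1::nat)}}))
       \<ge> (if x 0 = t then K2 else 0)" for x :: "nat \<Rightarrow> real"
  proof -
    have fin: "finite {rk. rk permutes {..(1::nat)}}" by (rule finite_permutations) simp
    have ne: "{rk. rk permutes {..(1::nat)}} \<noteq> {}" using permutes_id by blast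
    have "(if x 0 = t then K else 0) \<le> (\<Sum>rk\<in>{rk. rk permutes {..(1::nat)}}. (if x 0 = t \<and> rk 0 < rk 1 then K else 0))"
      using member_le_sum[of id "{rk. rk permutes {..(1::nat)}}" "\<lambda>rk. (if x 0 = t \<and> rk 0 < rk 1 then K else 0)"]
        permutes_id fin by simp
    then have "(if x 0 = t then K else 0) / of_nat C \<le> (\<Sum>rk\<in>{rk. rk permutes {..(1::nat)}}. (if x 0 = t \<and> rk 0 < rk 1 then K else 0)) / of_nat C"
      by (rule divide_right_mono_ennreal)
    then show ?thesis
      using nn_integral_pmf_of_set[OF ne fin, of "\<lambda>rk. (if x 0 = t \<and> rk 0 < rk 1 then K else 0)"]
      by (auto simp: C_def K2_def split: if_splits)
  qed
  have G1: "(\<integral>\<^sup>+ x. (\<integral>\<^sup>+ rk. (\<integral>\<^sup>+ S. (if 1 \<le> (1::nat) \<and> x 0 = t \<and> rk 0 < rk 1 then ennreal (S (Inr 0)) else 0)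
      \<partial>(PiM (customers (length tau) 1) (\<lambda>_. exp_service mu)))
    \<partial>(measure_pmf (pmf_of_set {rk. rk permutes {..(1::nat)}})))
   \<partial>(PiM {..<(1::nat)} (\<lambda>_. P))) \<ge> (\<integral>\<^sup>+ x. K2 * indicator {t} (x 0) \<partial>(PiM {..<(1::nat)} (\<lambda>_. P)))"
  proof (rule nn_integral_mono)
    fix x :: "nat \<Rightarrow> real"
    have "K2 * indicator {t} (x 0) = (if x 0 = t then K2 else 0)" by (simp add: indicator_def)
    also have "\<dots> \<le> (\<integral>\<^sup>+ rk. (if x 0 = t \<and> rk 0 < rk 1 then K else 0) \<partial>measure_pmf (pmf_of_set {rk. rk permutes {..(1::nat)}}))"
      by (rule rkl)
    also have "\<dots> = (\<integral>\<^sup>+ rk. (\<integral>\<^sup>+ S. (if 1 \<le> (1::nat) \<and> x 0 = t \<and> rk 0 < rk 1 then ennreal (S (Inr 0)) else 0)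
      \<partial>(PiM (customers (length tau) 1) (\<lambda>_. exp_service mu))) \<partial>measure_pmf (pmf_of_set {rk. rk permutes {..(1::nat)}}))"
      by (intro nn_integral_cong) (rule inner[symmetric])
    finally show "K2 * indicator {t} (x 0) \<le> (\<integral>\<^sup>+ rk. (\<integral>\<^sup>+ S. (if 1 \<le> (1::nat) \<and> x 0 = t \<and> rk 0 < rk 1 then ennreal (S (Inr 0)) else 0)
      \<partial>(PiM (customers (length tau) 1) (\<lambda>_. exp_service mu))) \<partial>measure_pmf (pmf_of_set {rk. rk permutes {..(1::nat)}}))" .
  qed
  have "(\<integral>\<^sup>+ x. K2 * indicator {t} (x 0) \<partial>(PiM {..<(1::nat)} (\<lambda>_. P))) = (\<integral>\<^sup>+ y. K2 * indicator {t} y \<partial>P)"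
  proof (rule comp_int[of _ "\<lambda>_. P" 0 "\<lambda>y. K2 * indicator {t} y"])
    show "(\<lambda>y. K2 * indicator {t} y) \<in> borel_measurable P"
      unfolding measurable_cong_sets[OF Ps refl] by simp
  qed (auto simp: P)
  also have "\<dots> = K2 * emeasure P {t}"
    by (rule nn_integral_cmult_indicator) (simp only: Ps borel_closed closed_singleton)
  finally have Ieq: "(\<integral>\<^sup>+ x. K2 * indicator {t} (x 0) \<partial>(PiM {..<(1::nat)} (\<lambda>_. P))) = K2 * emeasure P {t}" .
  have G1pos: "0 < (\<integral>\<^sup>+ x. (\<integral>\<^sup>+ rk. (\<integral>\<^sup>+ S. (if 1 \<le> (1::nat) \<and> x 0 = t \<and> rk 0 < rk 1 then ennreal (S (Inr 0)) else 0)
      \<partial>(PiM (customers (length tau) 1) (\<lambda>_. exp_service mu)))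
    \<partial>(measure_pmf (pmf_of_set {rk. rk permutes {..(1::nat)}})))
   \<partial>(PiM {..<(1::nat)} (\<lambda>_. P)))" 
  proof -
    have "0 < K2 * emeasure P {t}" using K20 Pt by (simp add: ennreal_zero_less_mult_iff)
    then have "0 < (\<integral>\<^sup>+ x. K2 * indicator {t} (x 0) \<partial>(PiM {..<(1::nat)} (\<lambda>_. P)))" by (simp only: Ieq)
    then show ?thesis using G1 by (rule less_le_trans)
  qed
  have p1: "0 < ennreal (pmf (poisson_pmf lam) 1)" using lam by simp
  let ?f = "\<lambda>n. ennreal (pmf (poisson_pmf lam) n) *
   (\<integral>\<^sup>+ x. (\<integral>\<^sup>+ rk. (\<integral>\<^sup>+ S. (if 1 \<le> n \<and> x 0 = t \<and> rk 0 < rk n then ennreal (S (Inr 0)) else 0)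
      \<partial>(PiM (customers (length tau) n) (\<lambda>_. exp_service mu)))
    \<partial>(measure_pmf (pmf_of_set {rk. rk permutes {..n}})))
   \<partial>(PiM {..<n} (\<lambda>_. P)))"
  have "?f 1 \<le> suminf ?f" using sum_le_suminf[OF summable_enn, of "{1}" ?f] by simp
  moreover have "0 < ?f 1" using p1 G1pos by (simp add: ennreal_zero_less_mult_iff)
  ultimately show ?thesis unfolding Gtot_def by order
qed



lemma ew0:
  assumes st: "sorted_wrt (<) tau" and tne: "tau \<noteq> []" and t0: "0 < tau ! 0"
    and P: "prob_space P" and Pp: "AE y in P. 0 < y"
  shows "exp_wait tau mu lam P 0 = 0"
proof -
  have inner: "(\<integral>\<^sup>+ x. (\<integral>\<^sup>+ rk. (\<integral>\<^sup>+ S. ennreal (tagged_wait tau 0 n x rk S)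
              \<partial>(PiM (customers (length tau) n) (\<lambda>_. exp_service mu)))
           \<partial>(measure_pmf (pmf_of_set {rk. rk permutes {..n}})))
         \<partial>(PiM {..<n} (\<lambda>_. P))) = 0" for n
  proof -
    have AEx: "AE x in PiM {..<n} (\<lambda>_. P). \<forall>i\<in>{..<n}. 0 < x i"
    proof (rule eventually_ball_finite, simp, intro ballI)
      fix i assume "i \<in> {..<n}"
      then show "AE x in PiM {..<n} (\<lambda>_. P). 0 < x i"
        using AE_PiM_component[of "{..<n}" "\<lambda>_. P" i "\<lambda>y. 0 < y"] P Pp by simp
    qed
    have "(\<integral>\<^sup>+ x. (\<integral>\<^sup>+ rk. (\<integral>\<^sup>+ S. ennreal (tagged_wait tau 0 n x rk S)
              \<partial>(PiM (customers (length tau) n) (\<lambda>_. exp_service mu)))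
           \<partial>(measure_pmf (pmf_of_set {rk. rk permutes {..n}})))
         \<partial>(PiM {..<n} (\<lambda>_. P))) = (\<integral>\<^sup>+ x. 0 \<partial>(PiM {..<n} (\<lambda>_. P)))"
    proof (rule nn_integral_cong_AE)
      show "AE x in PiM {..<n} (\<lambda>_. P). (\<integral>\<^sup>+ rk. (\<integral>\<^sup>+ S. ennreal (tagged_wait tau 0 n x rk S)
              \<partial>(PiM (customers (length tau) n) (\<lambda>_. exp_service mu)))
           \<partial>(measure_pmf (pmf_of_set {rk. rk permutes {..n}}))) = 0"
        using AEx
      proof (rule AE_mp, intro AE_I2 impI)
        fix x :: "nat \<Rightarrow> real" assume xp: "\<forall>i\<in>{..<n}. 0 < x i"
        have "(\<integral>\<^sup>+ rk. (\<integral>\<^sup>+ S. ennreal (tagged_wait tau 0 n x rk S)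
              \<partial>(PiM (customers (length tau) n) (\<lambda>_. exp_service mu)))
           \<partial>(measure_pmf (pmf_of_set {rk. rk permutes {..n}}))) = (\<integral>\<^sup>+ rk. 0 \<partial>(measure_pmf (pmf_of_set {rk. rk permutes {..n}})))"
        proof (rule nn_integral_cong_AE)
          show "AE rk in measure_pmf (pmf_of_set {rk. rk permutes {..n}}). (\<integral>\<^sup>+ S. ennreal (tagged_wait tau 0 n x rk S)
              \<partial>(PiM (customers (length tau) n) (\<lambda>_. exp_service mu))) = 0"
            using AE_rk[of n]
          proof (rule AE_mp, intro AE_I2 impI)
            fix rk assume rk: "rk permutes {..n}"
            have "tagged_wait tau 0 n x rk S = 0" for S
              using path_iia[OF st rk tne t0] xp by simp
            then show "(\<integral>\<^sup>+ S. ennreal (tagged_wait tau 0 n x rk S)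
              \<partial>(PiM (customers (length tau) n) (\<lambda>_. exp_service mu))) = 0" by simp
          qed
        qed
        then show "(\<integral>\<^sup>+ rk. (\<integral>\<^sup>+ S. ennreal (tagged_wait tau 0 n x rk S)
              \<partial>(PiM (customers (length tau) n) (\<lambda>_. exp_service mu)))
           \<partial>(measure_pmf (pmf_of_set {rk. rk permutes {..n}}))) = 0" by simp
      qed
    qed
    then show ?thesis by simp
  qed
  show ?thesis unfolding exp_wait_def inner by simp
qed

lemma ewm_pos:
  assumes st: "sorted_wrt (<) tau" and mu: "0 < mu" and lam: "0 < lam"
    and P: "prob_space P" and Ps: "sets P = sets borel" and m0: "0 \<le> m" and Pm: "0 < emeasure P {0..<m}"
  shows "0 < exp_wait tau mu lam P m"
proof -
  define Km where "Km = (\<integral>\<^sup>+ s. ennreal (s - m) \<partial>exp_service mu)"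
  have K0: "0 < Km" unfolding Km_def by (rule posK[OF m0 mu])
  define MS where "MS = PiM (customers (length tau) 1) (\<lambda>_. exp_service mu)"
  define MR where "MR = measure_pmf (pmf_of_set {rk. rk permutes {..(1::nat)}})"
  define MX where "MX = PiM {..<(1::nat)} (\<lambda>_. P)"
  have inner: "(\<integral>\<^sup>+ S. (if 0 \<le> x 0 \<and> x 0 < m then ennreal (S (Inr 0) - m) else 0) \<partial>MS)
       = (if 0 \<le> x 0 \<and> x 0 < m then Km else 0)" for x :: "nat \<Rightarrow> real"
  proof (cases "0 \<le> x 0 \<and> x 0 < m")
    case True
    have "(\<integral>\<^sup>+ S. ennreal (S (Inr 0) - m) \<partial>MS) = Km"
      unfolding MS_def Km_def
      by (rule comp_int[of _ "\<lambda>_. exp_service mu" "Inr 0" "\<lambda>s. ennreal (s - m)"])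
         (auto simp: customers_def exp_service_def prob_space_exponential_density[OF mu])
    then show ?thesis using True by simp
  next
    case False
    then have eqz: "(\<lambda>S. (if 0 \<le> x 0 \<and> x 0 < m then ennreal (S (Inr 0) - m) else 0)) = (\<lambda>S. 0)" by auto
    have "(\<integral>\<^sup>+ S. (if 0 \<le> x 0 \<and> x 0 < m then ennreal (S (Inr 0) - m) else 0) \<partial>MS) = 0"
      unfolding eqz by simp
    moreover have "(if 0 \<le> x 0 \<and> x 0 < m then Km else 0) = 0" using False by auto
    ultimately show ?thesis by (rule trans[OF _ sym])
  qed
  have lb: "(\<integral>\<^sup>+ x. Km * indicator {0..<m} (x 0) \<partial>MX) \<le>
     (\<integral>\<^sup>+ x. (\<integral>\<^sup>+ rk. (\<integral>\<^sup>+ S. ennreal (tagged_wait tau m 1 x rk S) \<partial>MS) \<partial>MR) \<partial>MX)"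
  proof (rule nn_integral_mono)
    fix x :: "nat \<Rightarrow> real"
    have "Km * indicator {0..<m} (x 0) = (\<integral>\<^sup>+ rk. (if 0 \<le> x 0 \<and> x 0 < m then Km else 0) \<partial>MR)"
      using measure_pmf.emeasure_space_1[of "pmf_of_set {rk. rk permutes {..(1::nat)}}"]
      by (simp add: MR_def indicator_def)
    also have "\<dots> = (\<integral>\<^sup>+ rk. (\<integral>\<^sup>+ S. (if 0 \<le> x 0 \<and> x 0 < m then ennreal (S (Inr 0) - m) else 0) \<partial>MS) \<partial>MR)"
      by (simp only: inner)
    also have "\<dots> \<le> (\<integral>\<^sup>+ rk. (\<integral>\<^sup>+ S. ennreal (tagged_wait tau m 1 x rk S) \<partial>MS) \<partial>MR)"
    proof (rule nn_integral_mono_AE)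
      show "AE rk in MR. (\<integral>\<^sup>+ S. (if 0 \<le> x 0 \<and> x 0 < m then ennreal (S (Inr 0) - m) else 0) \<partial>MS)
          \<le> (\<integral>\<^sup>+ S. ennreal (tagged_wait tau m 1 x rk S) \<partial>MS)"
        using AE_rk[of 1] unfolding MR_def[symmetric]
      proof (rule AE_mp, intro AE_I2 impI)
        fix rk assume rk: "rk permutes {..(1::nat)}"
        show "(\<integral>\<^sup>+ S. (if 0 \<le> x 0 \<and> x 0 < m then ennreal (S (Inr 0) - m) else 0) \<partial>MS)
          \<le> (\<integral>\<^sup>+ S. ennreal (tagged_wait tau m 1 x rk S) \<partial>MS)"
        proof (rule nn_integral_mono_AE)
          show "AE S in MS. (if 0 \<le> x 0 \<and> x 0 < m then ennreal (S (Inr 0) - m) else 0)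
             \<le> ennreal (tagged_wait tau m 1 x rk S)"
            using AE_S_nn[OF mu fin_cust, of "length tau" 1] unfolding MS_def[symmetric]
          proof (rule AE_mp, intro AE_I2 impI)
            fix S :: "cust \<Rightarrow> real" assume Snn: "\<forall>i\<in>customers (length tau) 1. 0 \<le> S i"
            show "(if 0 \<le> x 0 \<and> x 0 < m then ennreal (S (Inr 0) - m) else 0)
               \<le> ennreal (tagged_wait tau m 1 x rk S)"
            proof (cases "0 \<le> x 0 \<and> x 0 < m")
              case True
              then have "S (Inr 0) - m \<le> tagged_wait tau m 1 x rk S"
                using path_iic[OF st rk Snn] by simp
              then show ?thesis using True by (simp add: ennreal_leI)
            next
              case False
              then have "(if 0 \<le> x 0 \<and> x 0 < m then ennreal (S (Inr 0) - m) else 0) = 0" by auto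
              then show ?thesis by simp
            qed
          qed
        qed
      qed
    qed
    finally show "Km * indicator {0..<m} (x 0) \<le> (\<integral>\<^sup>+ rk. (\<integral>\<^sup>+ S. ennreal (tagged_wait tau m 1 x rk S) \<partial>MS) \<partial>MR)" .
  qed
  have "(\<integral>\<^sup>+ x. Km * indicator {0..<m} (x 0) \<partial>MX) = (\<integral>\<^sup>+ y. Km * indicator {0..<m} y \<partial>P)"
    unfolding MX_def
  proof (rule comp_int[of _ "\<lambda>_. P" 0 "\<lambda>y. Km * indicator {0..<m} y"])
    show "(\<lambda>y. Km * indicator {0..<m} y) \<in> borel_measurable P"
      unfolding measurable_cong_sets[OF Ps refl] by simp
  qed (auto simp: P)
  also have "\<dots> = Km * emeasure P {0..<m}"
    by (rule nn_integral_cmult_indicator) (simp only: Ps atLeastLessThan_borel)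
  finally have Ieq: "(\<integral>\<^sup>+ x. Km * indicator {0..<m} (x 0) \<partial>MX) = Km * emeasure P {0..<m}" .
  have "0 < Km * emeasure P {0..<m}" using K0 Pm by (simp add: ennreal_zero_less_mult_iff)
  then have "0 < (\<integral>\<^sup>+ x. Km * indicator {0..<m} (x 0) \<partial>MX)" by (simp only: Ieq)
  then have I1: "0 < (\<integral>\<^sup>+ x. (\<integral>\<^sup>+ rk. (\<integral>\<^sup>+ S. ennreal (tagged_wait tau m 1 x rk S) \<partial>MS) \<partial>MR) \<partial>MX)"
    using lb by (rule less_le_trans)
  have p1: "0 < ennreal (pmf (poisson_pmf lam) 1)" using lam by simp
  let ?f = "\<lambda>n. ennreal (pmf (poisson_pmf lam) n) *
        (\<integral>\<^sup>+ x. (\<integral>\<^sup>+ rk. (\<integral>\<^sup>+ S. ennreal (tagged_wait tau m n x rk S)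
              \<partial>(PiM (customers (length tau) n) (\<lambda>_. exp_service mu)))
           \<partial>(measure_pmf (pmf_of_set {rk. rk permutes {..n}})))
         \<partial>(PiM {..<n} (\<lambda>_. P)))"
  have "?f 1 \<le> suminf ?f" using sum_le_suminf[OF summable_enn, of "{1}" ?f] by simp
  moreover have "0 < ?f 1" using p1 I1 by (simp add: ennreal_zero_less_mult_iff MS_def MR_def MX_def)
  ultimately show ?thesis unfolding exp_wait_def by order
qed



lemma atom_zero:
  fixes T mu lam :: real and tau :: "real list" and P :: "real measure"
  assumes "T > 0" and mu: "mu > 0" and lam: "lam > 0"
    and st: "sorted_wrt (<) tau"
    and RD: "real_distribution P"
    and eq: "is_equilibrium tau mu lam T P"
    and t: "t \<in> {0<..T}"
  shows "measure P {t} = 0"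
proof (rule ccontr)
  interpret real_distribution P by (rule RD)
  assume "measure P {t} \<noteq> 0"
  then have mt: "0 < measure P {t}" using measure_nonneg[of P "{t}"] by linarith
  then have et: "0 < emeasure P {t}" by (simp add: emeasure_eq_measure)
  obtain E where E: "E \<ge> 0" "\<forall>s\<in>{0..T}. (s \<in> dist_support P \<longrightarrow> exp_wait tau mu lam P s = ennreal E) \<and>
      (s \<notin> dist_support P \<longrightarrow> exp_wait tau mu lam P s \<ge> ennreal E)"
    using eq unfolding is_equilibrium_def by blast
  have G: "0 < Gtot tau mu lam P t"
    by (rule Gtot_pos[OF mu lam prob_space_axioms et]) simp
  obtain e where e: "0 < e" "e \<le> t" "ennreal e < Gtot tau mu lam P t"
  proof (cases "Gtot tau mu lam P t = top")
    case True
    then show ?thesis using that[of t] t by simp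
  next
    case False
    then obtain g where g: "Gtot tau mu lam P t = ennreal g" "0 \<le> g" by (cases "Gtot tau mu lam P t") auto
    then have g0: "0 < g" using G by simp
    show ?thesis
    proof (rule that[of "min t (g/2)"])
      show "0 < min t (g/2)" using g0 t by simp
      show "min t (g/2) \<le> t" by simp
      have "min t (g/2) < g" using g0 by simp
      then show "ennreal (min t (g/2)) < Gtot tau mu lam P t" using g g0 t
        by (simp add: ennreal_less_iff)
    qed
  qed
  define t' where "t' = t - e"
  have tt: "t' < t" using e by (simp add: t'_def)
  have t'0: "t' \<in> {0..T}" using e t by (simp add: t'_def)
  have mi: "exp_wait tau mu lam P t' + Gtot tau mu lam P t \<le> exp_wait tau mu lam P t + ennreal e"
    using main_i[OF st mu tt prob_space_axioms] by (simp add: t'_def)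
  have tsup: "t \<in> dist_support P"
    unfolding dist_support_def
  proof (intro CollectI allI impI)
    fix d :: real assume "d > 0"
    then have "measure P {t} \<le> measure P {t - d<..<t + d}"
      by (intro finite_measure_mono) auto
    then show "measure P {t - d<..<t + d} > 0" using mt by simp
  qed
  have "exp_wait tau mu lam P t = ennreal E" using E(2) tsup t by auto
  moreover have "exp_wait tau mu lam P t' \<ge> ennreal E" using E(2) t'0 by (cases "t' \<in> dist_support P") auto
  ultimately have "ennreal E + Gtot tau mu lam P t \<le> ennreal E + ennreal e"
  proof -
    assume a1: "exp_wait tau mu lam P t = ennreal E" and a2: "ennreal E \<le> exp_wait tau mu lam P t'"
    have "ennreal E + Gtot tau mu lam P t \<le> exp_wait tau mu lam P t' + Gtot tau mu lam P t"
      using a2 by (rule add_right_mono)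
    also have "\<dots> \<le> exp_wait tau mu lam P t + ennreal e" by (rule mi)
    finally show ?thesis using a1 by simp
  qed
  then have "Gtot tau mu lam P t \<le> ennreal e" by (simp add: ennreal_add_left_cancel_le)
  then show False using e(3) by simp
qed

theorem proposition1:
  fixes T mu lam :: real and tau :: "real list" and P :: "real measure"
  assumes "T > 0" and "mu > 0" and "lam > 0"
    and "tau \<noteq> []" and "sorted_wrt (<) tau" and "\<forall>s\<in>set tau. 0 \<le> s \<and> s \<le> T"
    and "real_distribution P" and "measure P {0..T} = 1"
    and "is_equilibrium tau mu lam T P"
  shows "(\<forall>t\<in>{0<..T}. (cdf P \<longlongrightarrow> cdf P t) (at_left t))
         \<and> (tau ! 0 > 0 \<longrightarrow> cdf P 0 > 0)"
proof -
  interpret real_distribution P by (rule assms(7))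
  have atom: "measure P {t} = 0" if "t \<in> {0<..T}" for t
    using atom_zero[OF assms(1,2,3,5,7,9) that] .
  have cdf_split: "cdf P t = measure P {..<t} + measure P {t}" for t
  proof -
    have "{..t} = {..<t} \<union> {t}" by auto
    moreover have "measure P ({..<t} \<union> {t}) = measure P {..<t} + measure P {t}"
      by (rule finite_measure_Union) auto
    ultimately show ?thesis unfolding cdf_def by simp
  qed
  have part1: "\<forall>t\<in>{0<..T}. (cdf P \<longlongrightarrow> cdf P t) (at_left t)"
  proof
    fix t assume t: "t \<in> {0<..T}"
    have "cdf P t = measure P {..<t}" using cdf_split[of t] atom[OF t] by simp
    then show "(cdf P \<longlongrightarrow> cdf P t) (at_left t)" using cdf_at_left[of t] by simp
  qed
  have part2: "cdf P 0 > 0" if t0: "tau ! 0 > 0"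
  proof (rule ccontr)
    assume "\<not> cdf P 0 > 0"
    then have c0: "cdf P 0 = 0" using cdf_nonneg[of 0] by linarith
    obtain E where E: "E \<ge> 0" "\<forall>s\<in>{0..T}. (s \<in> dist_support P \<longrightarrow> exp_wait tau mu lam P s = ennreal E) \<and>
        (s \<notin> dist_support P \<longrightarrow> exp_wait tau mu lam P s \<ge> ennreal E)"
      using assms(9) unfolding is_equilibrium_def by blast
    have AEp: "AE y in P. 0 < y"
    proof (rule AE_I'[of "{..0}"])
      have "emeasure P {..0} = 0" using c0 by (simp add: cdf_def emeasure_eq_measure)
      then show "{..0} \<in> null_sets P" by (simp add: null_sets_def)
    qed auto
    have w0: "exp_wait tau mu lam P 0 = 0"
      by (rule ew0[OF assms(5,4) t0 prob_space_axioms AEp])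
    have E0: "E = 0"
    proof (cases "0 \<in> dist_support P")
      case True
      then have "ennreal E = 0" using E(2) w0 assms(1) by force
      then show ?thesis using E(1) by simp
    next
      case False
      then have "ennreal E \<le> 0" using E(2) w0 assms(1) by force
      then show ?thesis using E(1) by simp
    qed
    define A where "A = {s. 1/2 \<le> cdf P s}"
    define m where "m = Inf A"
    have TA: "T \<in> A"
    proof -
      have "measure P {0..T} \<le> measure P {..T}" by (intro finite_measure_mono) auto
      then show ?thesis using assms(8) by (simp add: A_def cdf_def)
    qed
    have lowA: "0 \<le> s" if "s \<in> A" for s
    proof (rule ccontr)
      assume "\<not> 0 \<le> s"
      then have "cdf P s \<le> cdf P 0" by (intro cdf_nondecreasing) simp
      then show False using that c0 by (simp add: A_def)
    qed
    have bdd: "bdd_below A" unfolding bdd_below_def using lowA by blast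
    have neA: "A \<noteq> {}" using TA by blast
    have m0: "0 \<le> m" unfolding m_def using lowA neA by (intro cInf_greatest) auto
    have mT: "m \<le> T" unfolding m_def using TA bdd by (rule cInf_lower)
    have below: "cdf P s < 1/2" if "s < m" for s
    proof (rule ccontr)
      assume "\<not> cdf P s < 1/2"
      then have "s \<in> A" by (simp add: A_def)
      then have "m \<le> s" unfolding m_def using bdd by (rule cInf_lower)
      then show False using that by simp
    qed
    have cm: "1/2 \<le> cdf P m"
    proof (rule ccontr)
      assume "\<not> 1/2 \<le> cdf P m"
      then have lt: "cdf P m < 1/2" by simp
      have "((cdf P) \<longlongrightarrow> cdf P m) (at_right m)"
        using cdf_is_right_cont[of m] by (simp add: continuous_within)
      then have "eventually (\<lambda>s. cdf P s < 1/2) (at_right m)"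
        using lt by (rule order_tendstoD)
      then obtain d where d: "d > m" "\<And>s. m < s \<Longrightarrow> s < d \<Longrightarrow> cdf P s < 1/2"
        by (auto simp: eventually_at_right_field)
      have "Inf A < d" using d(1) m_def by simp
      then obtain s where s: "s \<in> A" "s < d" using cInf_less_iff[OF neA bdd] by blast
      have "m \<le> s" unfolding m_def using s(1) bdd by (rule cInf_lower)
      then show False
      proof (cases "m = s")
        case True then show False using s lt by (simp add: A_def)
      next
        case False
        then have "m < s" using \<open>m \<le> s\<close> by simp
        then show False using d(2)[of s] s by (simp add: A_def)
      qed
    qed
    have mpos: "0 < m"
    proof (rule ccontr)
      assume "\<not> 0 < m"
      then have "m = 0" using m0 by simp
      then show False using cm c0 by simp
    qed
    have am: "measure P {m} = 0" using atom[of m] mpos mT by simp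
    have msup: "m \<in> dist_support P"
      unfolding dist_support_def
    proof (intro CollectI allI impI)
      fix d :: real assume d: "d > 0"
      have "cdf P m - cdf P (m - d) = measure P {m - d<..m}" using d by (intro cdf_diff_eq) simp
      moreover have "cdf P (m - d) < 1/2" using d below by simp
      moreover have "measure P {m - d<..m} \<le> measure P {m - d<..<m + d}"
        using d by (intro finite_measure_mono) auto
      ultimately show "measure P {m - d<..<m + d} > 0" using cm by linarith
    qed
    have "measure P {..<m} = cdf P m" using cdf_split[of m] am by simp
    moreover have "measure P {..<m} = measure P {..<0} + measure P {0..<m}"
    proof -
      have "{..<m} = {..<0} \<union> {0..<m}" using m0 by auto
      moreover have "measure P ({..<0} \<union> {0..<m}) = measure P {..<0} + measure P {0..<m}"
        by (rule finite_measure_Union) auto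
      ultimately show ?thesis by simp
    qed
    moreover have "measure P {..<0} \<le> cdf P 0" unfolding cdf_def by (intro finite_measure_mono) auto
    ultimately have "1/2 \<le> measure P {0..<m}" using cm c0 by linarith
    then have Pm: "0 < emeasure P {0..<m}" by (simp add: emeasure_eq_measure)
    have "0 < exp_wait tau mu lam P m"
      by (rule ewm_pos[OF assms(5,2,3) prob_space_axioms _ m0 Pm]) simp
    moreover have "exp_wait tau mu lam P m = ennreal E" using E(2) msup m0 mT by auto
    ultimately show False using E0 by simp
  qed
  show ?thesis using part1 part2 by blast
qed

end
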